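(* Let $k \geqslant 2$, $\ell \geqslant 0$, and let $A$ and $N$ be as defined in the context. Then $A$ accepts the string $a_1 a_2 \cdots a_{N-1}$.
   Context: A 2DFA $(\Sigma, Q, q_0, \delta, F)$: $\Sigma$ is a finite alphabet not containing end-markers $\vdash, \dashv$; $Q$ finite set of states; $q_0 \in Q$ initial; $\delta: Q \times (\Sigma \cup \{\vdash,\dashv\}) \to Q \times \{-1,+1\}$ partial; $F \subseteq Q$ accepting. On input $w = b_1\cdots b_m$ it works on tape $\vdash b_1 \cdots b_m \dashv$, starting at $\vdash$ in $q_0$; if $\delta(q,c)=(r,d)$ it enters $r$ and moves one cell in direction $d$; if undefined it rejects; it accepts if it ever arrives at $\dashv$ in a state of $F$; it may loop. Construction of $A$. Fix $k \geqslant 2$, $\ell \geqslant 0$, $Q^+ = \{1, \ldots, k\}$, $Q^- = \{1', \ldots, \ell'\}$, ordered by $i < j$ and $i' < j'$ iff $i < j$. A pair is $(P,R)$ with $P \subseteq Q^-$, $R \subseteq Q^+$, $|R| = |P|+1$. Writing $P = \{p_1 < \cdots < p_m\}$ and $R = \{r_1 < \cdots < r_{m+1}\}$, the sequence of the pair is the integer sequence $(r_1, -p_1, r_2, -p_2, \ldots, r_m, -p_m, r_{m+1})$, where a primed state $i'$ contributes the integer $i$ (so $-p_j$ for $p_j = i'$ is the integer $-i$). Pairs are ordered by the lexicographic order of their sequences (a proper prefix is smaller). Let $N = \binom{k+\ell}{\ell+1}$ be the number of pairs and enumerate them increasingly as $(P^{(1)},R^{(1)}) < \cdots < (P^{(N)},R^{(N)})$,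 with $P^{(i)} = \{p^{(i)}_1 < \cdots < p^{(i)}_{m_i}\}$ and $R^{(i)} = \{r^{(i)}_1 < \cdots < r^{(i)}_{m_i+1}\}$; in particular $(P^{(1)},R^{(1)}) = (\emptyset,\{1\})$ and $(P^{(N)},R^{(N)}) = (\emptyset,\{k\})$. The 2DFA $A$ has alphabet $\Sigma = \{a_1, \ldots, a_{N-1}\}$ (distinct symbols), states $Q = Q^+ \cup Q^-$, initial state $q_0 = 1$, accepting states $F = \{k\}$, and exactly the following transitions: $\delta(1, \vdash) = (r^{(1)}_1, +1)$; and for each $i \in \{1,\ldots,N-1\}$: $\delta(r^{(i)}_j, a_i) = (p^{(i)}_j, -1)$ for $j = 1, \ldots, m_i$; $\delta(r^{(i)}_{m_i+1}, a_i) = (r^{(i+1)}_1, +1)$; $\delta(p^{(i+1)}_j, a_i) = (r^{(i+1)}_{j+1}, +1)$ for $j = 1, \ldots, m_{i+1}$. No transitions are defined at $\dashv$. *)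

theory Defs
  imports Main
begin

datatype 's tsym = LMark | RMark | Letter 's

datatype dir = MoveL | MoveR

record ('q, 's) tdfa =
  tdelta :: "'q \<Rightarrow> 's tsym \<Rightarrow> ('q \<times> dir) option"
  tinit  :: "'q"
  tacc   :: "'q set"

definition tape :: "'s list \<Rightarrow> int \<Rightarrow> 's tsym option" where
  "tape w p = (if p = 0 then Some LMark
               else if p = int (length w) + 1 then Some RMark
               else if 1 \<le> p \<and> p \<le> int (length w) then Some (Letter (w ! nat (p - 1)))
               else None)"

definition dir_val :: "dir \<Rightarrow> int" where
  "dir_val d = (case d of MoveL \<Rightarrow> -1 | MoveR \<Rightarrow> 1)"

text \<open>One computation step on configurations (state, head position); \<open>None\<close> = halt/reject.\<close>
definition tstep :: "('q, 's, 'z) tdfa_scheme \<Rightarrow> 's list \<Rightarrow> 'q \<times> int \<Rightarrow> ('q \<times> int) option" where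
  "tstep M w c = (case tape w (snd c) of
      None \<Rightarrow> None
    | Some a \<Rightarrow> (case tdelta M (fst c) a of
        None \<Rightarrow> None
      | Some (r, d) \<Rightarrow> Some (r, snd c + dir_val d)))"

definition trun :: "('q, 's, 'z) tdfa_scheme \<Rightarrow> 's list \<Rightarrow> nat \<Rightarrow> ('q \<times> int) option" where
  "trun M w n = ((\<lambda>c. Option.bind c (tstep M w)) ^^ n) (Some (tinit M, 0))"

definition taccepts :: "('q, 's, 'z) tdfa_scheme \<Rightarrow> 's list \<Rightarrow> bool" where
  "taccepts M w \<longleftrightarrow> (\<exists>n q. trun M w n = Some (q, int (length w) + 1) \<and> q \<in> tacc M)"

text \<open>States: \<open>Inl i\<close> is the state \<open>i \<in> Q\<^sup>+\<close>, \<open>Inr i\<close> is the primed state \<open>i' \<in> Q\<^sup>-\<close>.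
  A pair \<open>(P,R)\<close> is represented by the sets of indices \<open>P \<subseteq> {1..\<ell>}\<close>, \<open>R \<subseteq> {1..k}\<close>.\<close>
definition pairs :: "nat \<Rightarrow> nat \<Rightarrow> (nat set \<times> nat set) set" where
  "pairs k l = {(P, R). P \<subseteq> {1..l} \<and> R \<subseteq> {1..k} \<and> card R = card P + 1}"

fun interleave :: "int list \<Rightarrow> int list \<Rightarrow> int list" where
  "interleave (r # rs) (p # ps) = r # p # interleave rs ps"
| "interleave rs [] = rs"
| "interleave [] ps = ps"

definition pair_seq :: "nat set \<times> nat set \<Rightarrow> int list" where
  "pair_seq pr = interleave (map int (sorted_list_of_set (snd pr)))
                            (map (\<lambda>p. - int p) (sorted_list_of_set (fst pr)))"

text \<open>Lexicographic order on sequences (a proper prefix is smaller).\<close>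
definition pair_less :: "nat set \<times> nat set \<Rightarrow> nat set \<times> nat set \<Rightarrow> bool" where
  "pair_less a b \<longleftrightarrow> (pair_seq a, pair_seq b) \<in> lexord {(x, y). x < (y::int)}"

definition numPairs :: "nat \<Rightarrow> nat \<Rightarrow> nat" where
  "numPairs k l = card (pairs k l)"

text \<open>The \<open>i\<close>-th pair in increasing order (1-indexed).\<close>
definition pairI :: "nat \<Rightarrow> nat \<Rightarrow> nat \<Rightarrow> nat set \<times> nat set" where
  "pairI k l i = (THE pr. pr \<in> pairs k l \<and> card {q \<in> pairs k l. pair_less q pr} = i - 1)"

definition mI :: "nat \<Rightarrow> nat \<Rightarrow> nat \<Rightarrow> nat" where
  "mI k l i = card (fst (pairI k l i))"

definition rI :: "nat \<Rightarrow> nat \<Rightarrow> nat \<Rightarrow> nat \<Rightarrow> nat" where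
  "rI k l i j = sorted_list_of_set (snd (pairI k l i)) ! (j - 1)"

definition pI :: "nat \<Rightarrow> nat \<Rightarrow> nat \<Rightarrow> nat \<Rightarrow> nat" where
  "pI k l i j = sorted_list_of_set (fst (pairI k l i)) ! (j - 1)"

text \<open>The transitions of \<open>A\<close>, listed as a relation; the letter \<open>a\<^sub>i\<close> is \<open>Letter i\<close>.\<close>
definition Atrans :: "nat \<Rightarrow> nat \<Rightarrow> nat + nat \<Rightarrow> nat tsym \<Rightarrow> (nat + nat) \<times> dir \<Rightarrow> bool" where
  "Atrans k l q c t \<longleftrightarrow>
     (q = Inl 1 \<and> c = LMark \<and> t = (Inl (rI k l 1 1), MoveR)) \<or>
     (\<exists>i \<in> {1..numPairs k l - 1}. c = Letter i \<and>
        ((\<exists>j \<in> {1..mI k l i}. q = Inl (rI k l i j) \<and> t = (Inr (pI k l i j), MoveL)) \<or>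
         (q = Inl (rI k l i (mI k l i + 1)) \<and> t = (Inl (rI k l (i + 1) 1), MoveR)) \<or>
         (\<exists>j \<in> {1..mI k l (i + 1)}. q = Inr (pI k l (i + 1) j) \<and>
                                     t = (Inl (rI k l (i + 1) (j + 1)), MoveR))))"

definition Adelta :: "nat \<Rightarrow> nat \<Rightarrow> nat + nat \<Rightarrow> nat tsym \<Rightarrow> ((nat + nat) \<times> dir) option" where
  "Adelta k l q c = (if \<exists>t. Atrans k l q c t then Some (SOME t. Atrans k l q c t) else None)"

definition autA :: "nat \<Rightarrow> nat \<Rightarrow> (nat + nat, nat) tdfa" where
  "autA k l = \<lparr> tdelta = Adelta k l, tinit = Inl 1, tacc = {Inl k} \<rparr>"

end

theory Submission
  imports Defs
begin

lemma interleave_set: "set (interleave xs ys) = set xs \<union> set ys"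
  by (induction xs ys rule: interleave.induct) auto

lemma interleave_hd: "\<exists>rest. interleave (r # rs) ys = r # rest"
  by (cases ys) auto

lemma pairs_finite: "finite (pairs k l)"
proof -
  have "pairs k l \<subseteq> Pow {1..l} \<times> Pow {1..k}" unfolding pairs_def by auto
  then show ?thesis by (rule finite_subset) auto
qed

lemma pairs_D:
  assumes "(P, R) \<in> pairs k l"
  shows "finite P" "finite R" "P \<subseteq> {1..l}" "R \<subseteq> {1..k}" "card R = card P + 1" "R \<noteq> {}"
  using assms unfolding pairs_def by (auto intro: finite_subset)

lemma pair_seq_pos:
  assumes "(P, R) \<in> pairs k l"
  shows "{x \<in> set (pair_seq (P, R)). x > 0} = int ` R"
    and "{x \<in> set (pair_seq (P, R)). x < 0} = (\<lambda>p. - int p) ` P"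
proof -
  note D = pairs_D[OF assms]
  have s: "set (pair_seq (P, R)) = int ` R \<union> (\<lambda>p. - int p) ` P"
    unfolding pair_seq_def interleave_set using D by simp
  show "{x \<in> set (pair_seq (P, R)). x > 0} = int ` R"
    unfolding s using D(3,4) by force
  show "{x \<in> set (pair_seq (P, R)). x < 0} = (\<lambda>p. - int p) ` P"
    unfolding s using D(3,4) by force
qed

lemma pair_seq_inj:
  assumes "pr \<in> pairs k l" "pr' \<in> pairs k l" "pair_seq pr = pair_seq pr'"
  shows "pr = pr'"
proof -
  obtain P R where pr: "pr = (P, R)" by force
  obtain P' R' where pr': "pr' = (P', R')" by force
  have "int ` R = int ` R'" using pair_seq_pos(1)[of P R k l] pair_seq_pos(1)[of P' R' k l] assms pr pr' by simp
  then have "R = R'" by (simp add: inj_image_eq_iff)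
  moreover have "(\<lambda>p. - int p) ` P = (\<lambda>p. - int p) ` P'"
    using pair_seq_pos(2)[of P R k l] pair_seq_pos(2)[of P' R' k l] assms pr pr' by simp
  then have "P = P'" by (simp add: inj_image_eq_iff inj_def)
  ultimately show ?thesis using pr pr' by simp
qed

lemma pair_seq_cons:
  assumes "(P, R) \<in> pairs k l"
  shows "\<exists>rest. pair_seq (P, R) = int (Min R) # rest"
proof -
  note D = pairs_D[OF assms]
  have "sorted_list_of_set R = Min R # sorted_list_of_set (R - {Min R})"
    using D by (simp add: sorted_list_of_set_nonempty)
  then show ?thesis unfolding pair_seq_def using interleave_hd by simp
qed

lemma pl_irr: "\<not> pair_less x x"
  unfolding pair_less_def by (rule lexord_irreflexive) auto

lemma pl_trans: "pair_less x y \<Longrightarrow> pair_less y z \<Longrightarrow> pair_less x z"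
  unfolding pair_less_def by (erule lexord_trans) (auto simp: trans_def)

lemma pl_tot: "x \<in> pairs k l \<Longrightarrow> y \<in> pairs k l \<Longrightarrow> x \<noteq> y \<Longrightarrow> pair_less x y \<or> pair_less y x"
proof -
  assume a: "x \<in> pairs k l" "y \<in> pairs k l" "x \<noteq> y"
  have "\<forall>a b. (a, b) \<in> {(x, y). x < (y::int)} \<or> a = b \<or> (b, a) \<in> {(x, y). x < (y::int)}" by auto
  from lexord_linear[OF this, of "pair_seq x" "pair_seq y"] pair_seq_inj[OF a(1,2)] a(3)
  show ?thesis unfolding pair_less_def by blast
qed

lemma rank_ex1:
  assumes fin: "finite S"
  and irr: "\<And>x. \<not> lt x x"
  and tr: "\<And>x y z. lt x y \<Longrightarrow> lt y z \<Longrightarrow> lt x z"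
  and tot: "\<And>x y. x\<in>S \<Longrightarrow> y\<in>S \<Longrightarrow> x \<noteq> y \<Longrightarrow> lt x y \<or> lt y x"
  and i: "i < card S"
  shows "\<exists>!x. x \<in> S \<and> card {q\<in>S. lt q x} = i"
proof -
  define rk where "rk x = card {q\<in>S. lt q x}" for x
  have lt_rk: "rk x < rk y" if "x \<in> S" "y \<in> S" "lt x y" for x y
  proof -
    have "{q\<in>S. lt q x} \<subseteq> {q\<in>S. lt q y}" using that(3) tr by blast
    moreover have "x \<in> {q\<in>S. lt q y}" "x \<notin> {q\<in>S. lt q x}" using that irr by auto
    ultimately have "{q\<in>S. lt q x} \<subset> {q\<in>S. lt q y}" by blast
    then show ?thesis unfolding rk_def by (rule psubset_card_mono[rotated]) (simp add: fin)
  qed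
  have inj: "inj_on rk S"
  proof (rule inj_onI, rule ccontr)
    fix x y assume "x \<in> S" "y \<in> S" "rk x = rk y" "x \<noteq> y"
    then have "lt x y \<or> lt y x" using tot by blast
    then show False using lt_rk[of x y] lt_rk[of y x] \<open>x \<in> S\<close> \<open>y \<in> S\<close> \<open>rk x = rk y\<close> by auto
  qed
  have rng: "rk ` S \<subseteq> {..<card S}"
  proof
    fix n assume "n \<in> rk ` S"
    then obtain x where x: "x \<in> S" "n = rk x" by blast
    have "{q\<in>S. lt q x} \<subseteq> S - {x}" using irr by blast
    then have "rk x \<le> card (S - {x})" unfolding rk_def by (intro card_mono) (auto simp: fin)
    also have "\<dots> < card S"
    proof -
      have "card S > 0" using x fin card_gt_0_iff by blast
      then show ?thesis using x fin by simp
    qed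
    finally show "n \<in> {..<card S}" using x by simp
  qed
  have eq: "rk ` S = {..<card S}"
    by (rule card_subset_eq) (use rng inj in \<open>auto simp: card_image\<close>)
  then obtain x where "x \<in> S" "rk x = i" using i by (metis imageE lessThan_iff)
  then show ?thesis using inj unfolding rk_def inj_on_def by blast
qed

lemma pairs_ex1:
  assumes "i < numPairs k l"
  shows "\<exists>!x. x \<in> pairs k l \<and> card {q\<in>pairs k l. pair_less q x} = i"
  apply (rule rank_ex1[where lt=pair_less and S="pairs k l"])
      apply (rule pairs_finite)
     apply (rule pl_irr)
    apply (erule (1) pl_trans)
   apply (erule (2) pl_tot)
  using assms by (simp add: numPairs_def)

lemma pairI_in:
  assumes "1 \<le> i" "i \<le> numPairs k l"
  shows "pairI k l i \<in> pairs k l"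
proof -
  have "i - 1 < numPairs k l" using assms by simp
  from theI'[OF pairs_ex1[OF this]] show ?thesis unfolding pairI_def by simp
qed

lemma pairI_eq:
  assumes "1 \<le> i" "i \<le> numPairs k l" "x \<in> pairs k l"
    "card {q\<in>pairs k l. pair_less q x} = i - 1"
  shows "pairI k l i = x"
proof -
  have "i - 1 < numPairs k l" using assms by simp
  show ?thesis unfolding pairI_def
    by (rule the1_equality[OF pairs_ex1[OF \<open>i - 1 < numPairs k l\<close>]]) (use assms in auto)
qed

lemma numPairs_ge2: "k \<ge> 2 \<Longrightarrow> numPairs k l \<ge> 2"
proof -
  assume k: "k \<ge> 2"
  have "{({}, {1}), ({}, {k})} \<subseteq> pairs k l" using k by (auto simp: pairs_def)
  then have "card {({}::nat set, {1::nat}), ({}, {k})} \<le> numPairs k l"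
    unfolding numPairs_def by (rule card_mono[OF pairs_finite])
  then show ?thesis using k by simp
qed

lemma Min_ge1: "(P, R) \<in> pairs k l \<Longrightarrow> 1 \<le> Min R \<and> Min R \<le> k"
proof -
  assume a: "(P, R) \<in> pairs k l"
  note D = pairs_D[OF a]
  have "Min R \<in> R" using D by (intro Min_in) auto
  then have "Min R \<in> {1..k}" using D(4) by blast
  then show ?thesis by simp
qed

lemma pairI_1:
  assumes "k \<ge> 2"
  shows "pairI k l 1 = ({}, {1})"
proof (rule pairI_eq)
  show "1 \<le> numPairs k l" using numPairs_ge2[OF assms, of l] by simp
  show "({}, {1}) \<in> pairs k l" using assms by (auto simp: pairs_def)
  have "\<not> pair_less q ({}, {1})" if "q \<in> pairs k l" for q
  proof -
    note th = that
    obtain P R where q: "q = (P, R)" by force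
    obtain rest where "pair_seq (P, R) = int (Min R) # rest" using pair_seq_cons[of P R k l] th q by auto
    moreover have "pair_seq ({}, {1}) = [1]" by (simp add: pair_seq_def)
    ultimately show ?thesis using Min_ge1[of P R k l] th q by (simp add: pair_less_def)
  qed
  then have e: "{q \<in> pairs k l. pair_less q ({}, {1})} = {}" by auto
  show "card {q \<in> pairs k l. pair_less q ({}, {1})} = 1 - 1" unfolding e by simp
qed simp

lemma pairI_N:
  assumes "k \<ge> 2"
  shows "pairI k l (numPairs k l) = ({}, {k})"
proof (rule pairI_eq)
  show "1 \<le> numPairs k l" using numPairs_ge2[OF assms, of l] by simp
  show kin: "({}, {k}) \<in> pairs k l" using assms by (auto simp: pairs_def)
  have "pair_less q ({}, {k})" if "q \<in> pairs k l" "q \<noteq> ({}, {k})" for q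
  proof -
    note th = that
    obtain P R where q: "q = (P, R)" by force
    note D = pairs_D[of P R k l]
    obtain rest where "pair_seq (P, R) = int (Min R) # rest" using pair_seq_cons[of P R k l] th q by auto
    moreover have "pair_seq ({}, {k}) = [int k]" by (simp add: pair_seq_def)
    moreover have "Min R < k"
    proof (rule ccontr)
      assume "\<not> Min R < k"
      then have mk: "Min R = k" using Min_ge1[of P R k l] th q by simp
      have "R \<subseteq> {k}"
      proof
        fix x assume "x \<in> R"
        then have "Min R \<le> x" "x \<le> k" using D th q by auto
        then show "x \<in> {k}" using mk by simp
      qed
      then have "R = {k}" using D th q by blast
      then have "P = {}" using D th q by simp
      then show False using \<open>R = {k}\<close> th q by simp
    qed
    ultimately show ?thesis using q by (simp add: pair_less_def)
  qed
  note lt = this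
  have e: "{q \<in> pairs k l. pair_less q ({}, {k})} = pairs k l - {({}, {k})}"
  proof (rule set_eqI)
    fix q
    show "q \<in> {q \<in> pairs k l. pair_less q ({}, {k})} \<longleftrightarrow> q \<in> pairs k l - {({}, {k})}"
      using lt[of q] pl_irr[of "({}, {k})"] by auto
  qed
  show "card {q \<in> pairs k l. pair_less q ({}, {k})} = numPairs k l - 1"
    unfolding e numPairs_def using kin pairs_finite[of k l] by (simp only: card_Diff_singleton)
qed simp

lemma pairI_lists:
  assumes "1 \<le> i" "i \<le> numPairs k l"
  shows "distinct (sorted_list_of_set (snd (pairI k l i)))"
    "length (sorted_list_of_set (snd (pairI k l i))) = mI k l i + 1"
    "distinct (sorted_list_of_set (fst (pairI k l i)))"
    "length (sorted_list_of_set (fst (pairI k l i))) = mI k l i"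
proof -
  obtain P R where q: "pairI k l i = (P, R)" by force
  note D = pairs_D[of P R k l, OF pairI_in[OF assms, unfolded q]]
  show "distinct (sorted_list_of_set (snd (pairI k l i)))"
    "length (sorted_list_of_set (snd (pairI k l i))) = mI k l i + 1"
    "distinct (sorted_list_of_set (fst (pairI k l i)))"
    "length (sorted_list_of_set (fst (pairI k l i))) = mI k l i"
    using D q by (auto simp: mI_def)
qed

lemma rI_inj:
  assumes "1 \<le> i" "i \<le> numPairs k l" "1 \<le> j" "j \<le> mI k l i + 1" "1 \<le> j'" "j' \<le> mI k l i + 1"
    "rI k l i j = rI k l i j'"
  shows "j = j'"
proof -
  have "j - 1 = j' - 1"
    using assms pairI_lists[OF assms(1,2)] nth_eq_iff_index_eq[of "sorted_list_of_set (snd (pairI k l i))" "j - 1" "j' - 1"]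
    unfolding rI_def by simp
  then show ?thesis using assms(3,5) by simp
qed

lemma pI_inj:
  assumes "1 \<le> i" "i \<le> numPairs k l" "1 \<le> j" "j \<le> mI k l i" "1 \<le> j'" "j' \<le> mI k l i"
    "pI k l i j = pI k l i j'"
  shows "j = j'"
proof -
  have "j - 1 = j' - 1"
    using assms pairI_lists[OF assms(1,2)] nth_eq_iff_index_eq[of "sorted_list_of_set (fst (pairI k l i))" "j - 1" "j' - 1"]
    unfolding pI_def by simp
  then show ?thesis using assms(3,5) by simp
qed

lemma Adelta_eq:
  assumes "Atrans k l q c t" "\<And>t'. Atrans k l q c t' \<Longrightarrow> t' = t"
  shows "Adelta k l q c = Some t"
proof -
  have e: "\<exists>t. Atrans k l q c t" using assms(1) by blast
  have "Atrans k l q c (SOME t. Atrans k l q c t)" using someI[of "Atrans k l q c" t, OF assms(1)] .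
  then have "(SOME t. Atrans k l q c t) = t" by (rule assms(2))
  then show ?thesis using e unfolding Adelta_def by simp
qed

lemma A0: "Adelta k l (Inl 1) LMark = Some (Inl (rI k l 1 1), MoveR)"
  by (rule Adelta_eq) (auto simp: Atrans_def)

lemma Atrans_Letter:
  assumes "Atrans k l q (Letter i) t"
  shows "(\<exists>j \<in> {1..mI k l i}. q = Inl (rI k l i j) \<and> t = (Inr (pI k l i j), MoveL)) \<or>
         (q = Inl (rI k l i (mI k l i + 1)) \<and> t = (Inl (rI k l (i + 1) 1), MoveR)) \<or>
         (\<exists>j \<in> {1..mI k l (i + 1)}. q = Inr (pI k l (i + 1) j) \<and>
                                     t = (Inl (rI k l (i + 1) (j + 1)), MoveR))"
  using assms unfolding Atrans_def by auto

lemma A1: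
  assumes "1 \<le> i" "i + 1 \<le> numPairs k l" "1 \<le> j" "j \<le> mI k l i"
  shows "Adelta k l (Inl (rI k l i j)) (Letter i) = Some (Inr (pI k l i j), MoveL)"
proof (rule Adelta_eq)
  show "Atrans k l (Inl (rI k l i j)) (Letter i) (Inr (pI k l i j), MoveL)"
    unfolding Atrans_def using assms by auto
  fix t' assume "Atrans k l (Inl (rI k l i j)) (Letter i) t'"
  from Atrans_Letter[OF this] show "t' = (Inr (pI k l i j), MoveL)"
  proof (elim disjE)
    assume "\<exists>j' \<in> {1..mI k l i}. Inl (rI k l i j) = Inl (rI k l i j') \<and> t' = (Inr (pI k l i j'), MoveL)"
    then obtain j' where "j' \<in> {1..mI k l i}" "rI k l i j = rI k l i j'" "t' = (Inr (pI k l i j'), MoveL)" by auto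
    moreover then have "j = j'" using rI_inj[of i k l j j'] assms by auto
    ultimately show ?thesis by simp
  next
    assume "Inl (rI k l i j) = Inl (rI k l i (mI k l i + 1)) \<and> t' = (Inl (rI k l (i + 1) 1), MoveR)"
    then have "j = mI k l i + 1" using rI_inj[of i k l j "mI k l i + 1"] assms by auto
    then show ?thesis using assms by simp
  qed auto
qed

lemma A2:
  assumes "1 \<le> i" "i + 1 \<le> numPairs k l"
  shows "Adelta k l (Inl (rI k l i (mI k l i + 1))) (Letter i) = Some (Inl (rI k l (i + 1) 1), MoveR)"
proof (rule Adelta_eq)
  show "Atrans k l (Inl (rI k l i (mI k l i + 1))) (Letter i) (Inl (rI k l (i + 1) 1), MoveR)"
    unfolding Atrans_def using assms by auto
  fix t' assume "Atrans k l (Inl (rI k l i (mI k l i + 1))) (Letter i) t'"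
  from Atrans_Letter[OF this] show "t' = (Inl (rI k l (i + 1) 1), MoveR)"
  proof (elim disjE)
    assume "\<exists>j' \<in> {1..mI k l i}. Inl (rI k l i (mI k l i + 1)) = Inl (rI k l i j') \<and> t' = (Inr (pI k l i j'), MoveL)"
    then obtain j' where "j' \<in> {1..mI k l i}" "rI k l i (mI k l i + 1) = rI k l i j'" by auto
    moreover then have "mI k l i + 1 = j'" using rI_inj[of i k l "mI k l i + 1" j'] assms by auto
    ultimately show ?thesis by simp
  qed auto
qed

lemma A3:
  assumes "1 \<le> i" "i + 1 \<le> numPairs k l" "1 \<le> j" "j \<le> mI k l (i + 1)"
  shows "Adelta k l (Inr (pI k l (i + 1) j)) (Letter i) = Some (Inl (rI k l (i + 1) (j + 1)), MoveR)"
proof (rule Adelta_eq)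
  show "Atrans k l (Inr (pI k l (i + 1) j)) (Letter i) (Inl (rI k l (i + 1) (j + 1)), MoveR)"
    unfolding Atrans_def using assms by auto
  fix t' assume "Atrans k l (Inr (pI k l (i + 1) j)) (Letter i) t'"
  from Atrans_Letter[OF this] show "t' = (Inl (rI k l (i + 1) (j + 1)), MoveR)"
  proof (elim disjE)
    assume "\<exists>j' \<in> {1..mI k l (i + 1)}. Inr (pI k l (i + 1) j) = Inr (pI k l (i + 1) j') \<and>
                                     t' = (Inl (rI k l (i + 1) (j' + 1)), MoveR)"
    then obtain j' where "j' \<in> {1..mI k l (i + 1)}" "pI k l (i + 1) j = pI k l (i + 1) j'"
       "t' = (Inl (rI k l (i + 1) (j' + 1)), MoveR)" by auto
    moreover then have "j = j'" using pI_inj[of "i + 1" k l j j'] assms by auto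
    ultimately show ?thesis by simp
  qed auto
qed

lemma trun_Suc: "trun M w (Suc n) = Option.bind (trun M w n) (tstep M w)"
  unfolding trun_def by simp

lemma tape_letter:
  assumes "1 \<le> i" "i < N"
  shows "tape [1..<N] (int i) = Some (Letter i)"
proof -
  have "nat (int i - 1) = i - 1" using assms by simp
  moreover have "[1..<N] ! (i - 1) = i" using assms by simp
  ultimately show ?thesis using assms unfolding tape_def by auto
qed

theorem mainTheorem4:
  fixes k l :: nat
  assumes "k \<ge> 2"
  shows "taccepts (autA k l) [1..<numPairs k l]"
proof -
  define N where "N = numPairs k l"
  define w where "w = [1..<N]"
  define M where "M = autA k l"
  have N2: "N \<ge> 2" unfolding N_def using numPairs_ge2[OF assms] .
  have len: "int (length w) + 1 = int N" unfolding w_def using N2 by simp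
  have tapeL: "tape w (int i) = Some (Letter i)" if "1 \<le> i" "i < N" for i
    unfolding w_def using tape_letter[OF that] .
  have tape0: "tape w 0 = Some LMark" unfolding tape_def by simp
  have td: "tdelta M = Adelta k l" "tinit M = Inl 1" "tacc M = {Inl k}"
    unfolding M_def autA_def by simp_all
  define R where "R c = (\<exists>n. trun M w n = Some c)" for c
  have Rstep: "R c'" if h1: "R c" and h2: "tstep M w c = Some c'" for c c'
  proof -
    obtain n where "trun M w n = Some c" using h1 unfolding R_def by blast
    then have "trun M w (Suc n) = Some c'" using h2 by (simp add: trun_Suc)
    then show ?thesis unfolding R_def by blast
  qed
  have R0: "R (Inl 1, 0)" unfolding R_def trun_def using td by (intro exI[of _ 0]) simp
  have R1: "R (Inl (rI k l 1 1), int 1)"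
    by (rule Rstep[OF R0]) (simp add: tstep_def tape0 td A0[simplified] dir_val_def)
  have m1: "mI k l 1 = 0" unfolding mI_def pairI_1[OF assms] by simp
  have inner: "R (Inl (rI k l i (Suc j)), int i)"
    if "1 \<le> i" "i < N" "R (Inl (rI k l i 1), int i)" "j \<le> mI k l i" for i j
    using that(4)
  proof (induction j)
    case 0
    then show ?case using that(3) by simp
  next
    case (Suc j)
    then have IH: "R (Inl (rI k l i (Suc j)), int i)" by simp
    have "i \<noteq> 1" using Suc.prems m1 by auto
    then have i2: "i \<ge> 2" using that(1) by simp
    have a1: "Adelta k l (Inl (rI k l i (Suc j))) (Letter i) = Some (Inr (pI k l i (Suc j)), MoveL)"
      using A1[of i k l "Suc j"] that Suc.prems unfolding N_def by simp
    have s1: "R (Inr (pI k l i (Suc j)), int i - 1)"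
      by (rule Rstep[OF IH]) (simp add: tstep_def tapeL[OF that(1,2)] td a1 dir_val_def)
    have ii: "i - 1 + 1 = i" using i2 by simp
    have a3: "Adelta k l (Inr (pI k l i (Suc j))) (Letter (i - 1)) = Some (Inl (rI k l i (Suc (Suc j))), MoveR)"
      using A3[of "i - 1" k l "Suc j"] that Suc.prems i2 unfolding N_def ii by simp
    have tp: "tape w (int i - 1) = Some (Letter (i - 1))"
      using tapeL[of "i - 1"] i2 that(2) by (simp add: of_nat_diff)
    show ?case
      by (rule Rstep[OF s1]) (simp add: tstep_def tp td a3[simplified] dir_val_def)
  qed
  have outer: "R (Inl (rI k l i 1), int i)" if "1 \<le> i" "i \<le> N" for i
    using that
  proof (induction i)
    case 0
    then show ?case by simp
  next
    case (Suc i)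
    show ?case
    proof (cases "i = 0")
      case True
      then show ?thesis using R1 by simp
    next
      case False
      then have i1: "1 \<le> i" "i < N" using Suc.prems by auto
      then have Ri: "R (Inl (rI k l i 1), int i)" using Suc.IH by simp
      have Rm: "R (Inl (rI k l i (mI k l i + 1)), int i)"
        using inner[OF i1 Ri, of "mI k l i"] by simp
      have a2: "Adelta k l (Inl (rI k l i (mI k l i + 1))) (Letter i) = Some (Inl (rI k l (i + 1) 1), MoveR)"
        using A2[of i k l] i1 unfolding N_def by simp
      have "R (Inl (rI k l (i + 1) 1), int i + 1)"
        by (rule Rstep[OF Rm]) (simp add: tstep_def tapeL[OF i1] td a2[simplified] dir_val_def)
      then show ?thesis by (simp add: add.commute)
    qed
  qed
  have "R (Inl (rI k l N 1), int N)" using outer[of N] N2 by simp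
  moreover have "rI k l N 1 = k" unfolding rI_def N_def pairI_N[OF assms] by simp
  ultimately have "R (Inl k, int (length w) + 1)" using len by simp
  then show ?thesis unfolding taccepts_def R_def M_def w_def N_def
    by (auto simp: autA_def)
qed

end
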